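(* Given a moment graph $\mathcal{G}$ on a lattice $\Lambda$ and a $\mathcal{G}$-compatible equivalence relation `$\sim$' on its vertex set, the quotient $\mathcal{G}_\sim$ is a moment graph on $\Lambda$.
   Context: A moment graph on a lattice $\Lambda$ is $\mathcal{G}=\big((V,\le), l\colon E\to \Lambda\setminus\{0\}\big)$ where $(V,\le)$ is a poset, $E\subset V\times V$ is a set of directed edges $v\to w$ labelled by $l(v\to w)\in\Lambda\setminus\{0\}$, and for every edge $v\to w$ we have $v\le w$, $v\ne w$. An equivalence relation `$\sim$' on $V$ is $\mathcal{G}$-compatible if (EQV1) $v\sim w$ implies $v\sim u$ for all $v\le u\le w$; (EQV2) if $v_1\to w_1\in E$, $v_1\not\sim w_1$, then for any $v_2\sim v_1$ there is a unique $w_2\sim w_1$ with $v_2\to w_2\in E$, and moreover $l(v_1\to w_1)=l(v_2\to w_2)$. The quotient $\mathcal{G}_\sim=\big((V_\sim,\le_\sim),l_\sim\colon E_\sim\to\Lambda\setminus\{0\}\big)$ has vertex set $V_\sim$ the set of equivalence classes $[v]$; edges $E_\sim=\{[v]\to[w]\mid v\not\sim w,\ \exists v'\sim v,\ w'\sim w \text{ with } v'\to w'\in E\}$; $\le_\sim$ the transitive closure of the relations $[v]\le_\sim[w]$ for $[v]\to[w]\in E_\sim$; and $l_\sim([v]\to[w]):=l(v'\to w')$ for $v'\sim v$, $w'\sim w$, $v'\to w'\in E$. *)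

theory Defs
  imports "HOL-Analysis.Analysis"
begin

text \<open>The lattice \<Lambda> is rendered as Z^n, i.e. the type int ^ 'n.\<close>

definition moment_graph ::
  "'v set \<Rightarrow> 'v rel \<Rightarrow> ('v \<times> 'v) set \<Rightarrow> ('v \<times> 'v \<Rightarrow> int ^ 'n) \<Rightarrow> bool" where
  "moment_graph V le E lab \<longleftrightarrow>
     partial_order_on V le \<and>
     E \<subseteq> V \<times> V \<and>
     (\<forall>(v, w) \<in> E. (v, w) \<in> le \<and> v \<noteq> w \<and> lab (v, w) \<noteq> 0)"

definition compatible_equiv ::
  "'v set \<Rightarrow> 'v rel \<Rightarrow> ('v \<times> 'v) set \<Rightarrow> ('v \<times> 'v \<Rightarrow> int ^ 'n) \<Rightarrow> 'v rel \<Rightarrow> bool" where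
  "compatible_equiv V le E lab R \<longleftrightarrow>
     equiv V R \<and>
     \<comment> \<open>EQV1\<close>
     (\<forall>v w u. (v, w) \<in> R \<and> u \<in> V \<and> (v, u) \<in> le \<and> (u, w) \<in> le \<longrightarrow> (v, u) \<in> R) \<and>
     \<comment> \<open>EQV2\<close>
     (\<forall>v1 w1 v2. (v1, w1) \<in> E \<and> (v1, w1) \<notin> R \<and> (v2, v1) \<in> R \<longrightarrow>
        (\<exists>!w2. (w2, w1) \<in> R \<and> (v2, w2) \<in> E) \<and>
        (\<forall>w2. (w2, w1) \<in> R \<and> (v2, w2) \<in> E \<longrightarrow> lab (v1, w1) = lab (v2, w2)))"

definition quot_V :: "'v set \<Rightarrow> 'v rel \<Rightarrow> 'v set set" where
  "quot_V V R = V // R"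

definition quot_E :: "'v set \<Rightarrow> 'v rel \<Rightarrow> ('v \<times> 'v) set \<Rightarrow> ('v set \<times> 'v set) set" where
  "quot_E V R E = {(R `` {v}, R `` {w}) | v w. v \<in> V \<and> w \<in> V \<and> (v, w) \<notin> R \<and>
      (\<exists>v' w'. (v', v) \<in> R \<and> (w', w) \<in> R \<and> (v', w') \<in> E)}"

definition quot_le :: "'v set \<Rightarrow> 'v rel \<Rightarrow> ('v \<times> 'v) set \<Rightarrow> 'v set rel" where
  "quot_le V R E = Id_on (V // R) \<union> (quot_E V R E)\<^sup>+"

definition quot_lab ::
  "'v rel \<Rightarrow> ('v \<times> 'v) set \<Rightarrow> ('v \<times> 'v \<Rightarrow> int ^ 'n) \<Rightarrow> 'v set \<times> 'v set \<Rightarrow> int ^ 'n" where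
  "quot_lab R E lab = (\<lambda>(X, Y). lab (SOME p. fst p \<in> X \<and> snd p \<in> Y \<and> p \<in> E))"

end

theory Submission
  imports Defs
begin

lemma qE_mem:
  assumes eq: "equiv V R" and XY: "(X, Y) \<in> quot_E V R E"
  shows "\<exists>v w v' w'. X = R `` {v} \<and> Y = R `` {w} \<and> v \<in> V \<and> w \<in> V \<and> (v, w) \<notin> R
     \<and> (v', v) \<in> R \<and> (w', w) \<in> R \<and> (v', w') \<in> E"
  using XY unfolding quot_E_def by blast

lemma lift_path:
  assumes mg: "moment_graph V le E lab" and ce: "compatible_equiv V le E lab R"
    and P: "(X, Y) \<in> (quot_E V R E)\<^sup>+"
  shows "\<forall>a\<in>X. \<exists>c b. b \<in> Y \<and> (a, c) \<in> E \<and> (a, c) \<notin> R \<and> (c, b) \<in> le"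
  using P
proof (induction rule: trancl_induct)
  case (base Y)
  have eq: "equiv V R" using ce unfolding compatible_equiv_def by blast
  have po: "partial_order_on V le" using mg unfolding moment_graph_def by blast
  have EV: "E \<subseteq> V \<times> V" using mg unfolding moment_graph_def by blast
  have rl: "refl_on V le" using po unfolding partial_order_on_def preorder_on_def by blast
  have e2: "\<And>v1 w1 v2. (v1, w1) \<in> E \<Longrightarrow> (v1, w1) \<notin> R \<Longrightarrow> (v2, v1) \<in> R \<Longrightarrow>
        (\<exists>w2. (w2, w1) \<in> R \<and> (v2, w2) \<in> E)"
    using ce unfolding compatible_equiv_def by blast
  obtain v w v' w' where o: "X = R `` {v}" "Y = R `` {w}" "v \<in> V" "w \<in> V" "(v, w) \<notin> R"
     "(v', v) \<in> R" "(w', w) \<in> R" "(v', w') \<in> E" using qE_mem[OF eq base] by blast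
  show ?case
  proof
    fix a assume a: "a \<in> X"
    have va: "(v, a) \<in> R" using a o by blast
    have nR: "(v', w') \<notin> R" using o eq unfolding equiv_def by (meson symE transE)
    have av': "(a, v') \<in> R" using va o eq unfolding equiv_def by (meson symE transE)
    obtain c where c: "(c, w') \<in> R" "(a, c) \<in> E" using e2[OF o(8) nR av'] by blast
    have cY: "c \<in> Y" using c o eq unfolding equiv_def by (meson symE transE Image_singleton_iff)
    have acR: "(a, c) \<notin> R" using va cY o eq unfolding equiv_def
      by (meson symE transE Image_singleton_iff)
    have "(c, c) \<in> le" using rl c EV unfolding refl_on_def by blast
    then show "\<exists>c b. b \<in> Y \<and> (a, c) \<in> E \<and> (a, c) \<notin> R \<and> (c, b) \<in> le"
      using cY c acR by blast
  qed
next
  case (step Y Z)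
  have eq: "equiv V R" using ce unfolding compatible_equiv_def by blast
  have po: "partial_order_on V le" using mg unfolding moment_graph_def by blast
  have tl: "trans le" using po unfolding partial_order_on_def preorder_on_def by blast
  have Ele: "\<And>x y. (x, y) \<in> E \<Longrightarrow> (x, y) \<in> le" using mg unfolding moment_graph_def by blast
  have e2: "\<And>v1 w1 v2. (v1, w1) \<in> E \<Longrightarrow> (v1, w1) \<notin> R \<Longrightarrow> (v2, v1) \<in> R \<Longrightarrow>
        (\<exists>w2. (w2, w1) \<in> R \<and> (v2, w2) \<in> E)"
    using ce unfolding compatible_equiv_def by blast
  obtain v w v' w' where o: "Y = R `` {v}" "Z = R `` {w}" "v \<in> V" "w \<in> V" "(v, w) \<notin> R"
     "(v', v) \<in> R" "(w', w) \<in> R" "(v', w') \<in> E" using qE_mem[OF eq step(2)] by blast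
  show ?case
  proof
    fix a assume a: "a \<in> X"
    obtain c b where cb: "b \<in> Y" "(a, c) \<in> E" "(a, c) \<notin> R" "(c, b) \<in> le"
      using step(3) a by blast
    have vb: "(v, b) \<in> R" using cb o by blast
    have nR: "(v', w') \<notin> R" using o eq unfolding equiv_def by (meson symE transE)
    have bv': "(b, v') \<in> R" using vb o eq unfolding equiv_def by (meson symE transE)
    obtain d where d: "(d, w') \<in> R" "(b, d) \<in> E" using e2[OF o(8) nR bv'] by blast
    have dZ: "d \<in> Z" using d o eq unfolding equiv_def by (meson symE transE Image_singleton_iff)
    have "(c, d) \<in> le" using tl cb(4) Ele[OF d(2)] by (meson transE)
    then show "\<exists>c b. b \<in> Z \<and> (a, c) \<in> E \<and> (a, c) \<notin> R \<and> (c, b) \<in> le"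
      using dZ cb by blast
  qed
qed

lemma no_cycle:
  assumes mg: "moment_graph V le E lab" and ce: "compatible_equiv V le E lab R"
    and P: "(X, X) \<in> (quot_E V R E)\<^sup>+" and X: "X \<in> V // R"
  shows False
proof -
  have eq: "equiv V R" using ce unfolding compatible_equiv_def by blast
  have po: "partial_order_on V le" using mg unfolding moment_graph_def by blast
  have EV: "E \<subseteq> V \<times> V" using mg unfolding moment_graph_def by blast
  have Ele: "\<And>x y. (x, y) \<in> E \<Longrightarrow> (x, y) \<in> le" using mg unfolding moment_graph_def by blast
  have e1: "\<And>v w u. (v, w) \<in> R \<Longrightarrow> u \<in> V \<Longrightarrow> (v, u) \<in> le \<Longrightarrow> (u, w) \<in> le \<Longrightarrow> (v, u) \<in> R"
    using ce unfolding compatible_equiv_def by blast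
  obtain x where x: "x \<in> V" "X = R `` {x}" using X unfolding quotient_def by blast
  have "x \<in> X" using x eq unfolding equiv_def refl_on_def by blast
  then obtain c b where cb: "b \<in> X" "(x, c) \<in> E" "(x, c) \<notin> R" "(c, b) \<in> le"
    using lift_path[OF mg ce P] by blast
  have "(x, b) \<in> R" using cb x by blast
  moreover have "c \<in> V" using cb EV by blast
  ultimately have "(x, c) \<in> R" using e1 Ele[OF cb(2)] cb(4) by blast
  then show False using cb by blast
qed

theorem mainTheorem1:
  fixes V :: "'v set" and le :: "'v rel" and E :: "('v \<times> 'v) set"
    and lab :: "'v \<times> 'v \<Rightarrow> int ^ 'n" and R :: "'v rel"
  assumes "moment_graph V le E lab"
    and "compatible_equiv V le E lab R"
  shows "moment_graph (quot_V V R) (quot_le V R E) (quot_E V R E) (quot_lab R E lab)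
    \<and> (\<forall>(X, Y) \<in> quot_E V R E. \<forall>v' w'. v' \<in> X \<and> w' \<in> Y \<and> (v', w') \<in> E \<longrightarrow>
          lab (v', w') = quot_lab R E lab (X, Y))"
proof -
  note mg = assms(1) and ce = assms(2)
  have eq: "equiv V R" using ce unfolding compatible_equiv_def by blast
  have EV: "E \<subseteq> V \<times> V" using mg unfolding moment_graph_def by blast
  have labnz: "\<And>x y. (x, y) \<in> E \<Longrightarrow> lab (x, y) \<noteq> 0" using mg unfolding moment_graph_def by blast
  have e2: "\<And>v1 w1 v2 w2. (v1, w1) \<in> E \<Longrightarrow> (v1, w1) \<notin> R \<Longrightarrow> (v2, v1) \<in> R \<Longrightarrow>
        (w2, w1) \<in> R \<Longrightarrow> (v2, w2) \<in> E \<Longrightarrow> lab (v1, w1) = lab (v2, w2)"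
    using ce unfolding compatible_equiv_def by blast
  have symR: "sym R" and trR: "trans R" using eq unfolding equiv_def by auto
  have QEsub: "quot_E V R E \<subseteq> (V // R) \<times> (V // R)"
    unfolding quot_E_def quotient_def by blast
  have lab_ok: "\<And>X Y v' w'. (X, Y) \<in> quot_E V R E \<Longrightarrow> v' \<in> X \<Longrightarrow> w' \<in> Y \<Longrightarrow> (v', w') \<in> E \<Longrightarrow>
          lab (v', w') = quot_lab R E lab (X, Y)"
  proof -
    fix X Y v' w' assume XY: "(X, Y) \<in> quot_E V R E" and m: "v' \<in> X" "w' \<in> Y" "(v', w') \<in> E"
    obtain v w where o: "X = R `` {v}" "Y = R `` {w}" "(v, w) \<notin> R"
      using qE_mem[OF eq XY] by blast
    have ex: "\<exists>p. fst p \<in> X \<and> snd p \<in> Y \<and> p \<in> E" using m by auto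
    define p where "p = (SOME p. fst p \<in> X \<and> snd p \<in> Y \<and> p \<in> E)"
    have p: "fst p \<in> X \<and> snd p \<in> Y \<and> p \<in> E" unfolding p_def using someI_ex[OF ex] .
    obtain a b where ab: "p = (a, b)" by fastforce
    have va: "(v, a) \<in> R" "(w, b) \<in> R" "(v, v') \<in> R" "(w, w') \<in> R" using p ab o m by auto
    have nR: "(a, b) \<notin> R" using va o(3) symR trR by (meson symE transE)
    have av: "(v', a) \<in> R" "(w', b) \<in> R" using va symR trR by (meson symE transE)+
    have "lab (a, b) = lab (v', w')" using e2[OF _ nR av(1) av(2) m(3)] p ab by auto
    moreover have "quot_lab R E lab (X, Y) = lab (a, b)"
      unfolding quot_lab_def using p_def ab by simp
    ultimately show "lab (v', w') = quot_lab R E lab (X, Y)" by simp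
  qed
  have po: "partial_order_on (V // R) (quot_le V R E)"
  proof -
    have tc: "(quot_E V R E)\<^sup>+ \<subseteq> (V // R) \<times> (V // R)"
      using QEsub by (simp add: trancl_subset_Sigma)
    have refl: "refl_on (V // R) (quot_le V R E)"
      unfolding refl_on_def quot_le_def using tc by auto
    have tr: "trans (quot_le V R E)"
      unfolding quot_le_def trans_def by (auto intro: trancl_trans)
    have an: "antisym (quot_le V R E)"
    proof (rule antisymI)
      fix X Y assume a: "(X, Y) \<in> quot_le V R E" "(Y, X) \<in> quot_le V R E"
      show "X = Y"
      proof (rule ccontr)
        assume ne: "X \<noteq> Y"
        then have "(X, Y) \<in> (quot_E V R E)\<^sup>+" "(Y, X) \<in> (quot_E V R E)\<^sup>+"
          using a unfolding quot_le_def by auto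
        then have c: "(X, X) \<in> (quot_E V R E)\<^sup>+" by (rule trancl_trans)
        then have "X \<in> V // R" using tc by blast
        then show False using no_cycle[OF mg ce c] by blast
      qed
    qed
    have sub: "quot_le V R E \<subseteq> (V // R) \<times> (V // R)"
      unfolding quot_le_def using tc by (auto simp: Id_on_def)
    show ?thesis unfolding partial_order_on_def preorder_on_def using refl tr an sub by blast
  qed
  have edges: "\<forall>(X, Y) \<in> quot_E V R E. (X, Y) \<in> quot_le V R E \<and> X \<noteq> Y \<and> quot_lab R E lab (X, Y) \<noteq> 0"
  proof (clarify)
    fix X Y assume XY: "(X, Y) \<in> quot_E V R E"
    obtain v w v' w' where o: "X = R `` {v}" "Y = R `` {w}" "v \<in> V" "w \<in> V" "(v, w) \<notin> R"
       "(v', v) \<in> R" "(w', w) \<in> R" "(v', w') \<in> E" using qE_mem[OF eq XY] by blast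
    have "w \<in> Y" using o eq unfolding equiv_def refl_on_def by blast
    then have "X \<noteq> Y" using o by blast
    moreover have "(X, Y) \<in> quot_le V R E" unfolding quot_le_def using XY by auto
    moreover have "v' \<in> X" "w' \<in> Y" using o symR by (auto dest: symD)
    then have "quot_lab R E lab (X, Y) \<noteq> 0" using lab_ok[OF XY _ _ o(8)] labnz[OF o(8)] by simp
    ultimately show "(X, Y) \<in> quot_le V R E \<and> X \<noteq> Y \<and> quot_lab R E lab (X, Y) \<noteq> 0" by blast
  qed
  show ?thesis
    unfolding moment_graph_def quot_V_def using po QEsub edges lab_ok by blast
qed

end
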